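(* Let $\pi=\sigma_0,\sigma_1,\dots,\sigma_t=\tau$ be permutations in $S_n$ such that for each $0\le m<t$, $\sigma_{m+1}$ is obtained from $\sigma_m$ by exchanging two entries in adjacent positions $p,p+1$. Say that such a step puts the pair in decreasing order if the entry in position $p$ is smaller than the entry in position $p+1$ in $\sigma_m$ (so it is larger in $\sigma_{m+1}$), and in increasing order otherwise. Suppose $s$ of the steps put the pair in decreasing order and $r$ in increasing order, so $r+s=t$. Let $\lambda=\lambda(\pi)$, $\mu=\lambda(\tau)$ (parts padded with zeros). Then for every $1\le j\le n$, \[\sum_{i=1}^j\mu_i-r\le\sum_{i=1}^j\lambda_i\le\sum_{i=1}^j\mu_i+s.\]
   Context: Permutations are written in one-line notation. For $\pi\in S_n$, $\lambda(\pi)$ denotes the shape of the tableaux associated with $\pi$ by the RSK correspondence. *)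

theory Defs
  imports Main
begin

definition is_perm :: "nat \<Rightarrow> nat list \<Rightarrow> bool" where
  "is_perm n xs \<longleftrightarrow> length xs = n \<and> distinct xs \<and> set xs = {1..n}"

text \<open>Schensted row insertion of x into a tableau (list of rows, top row first):
  x bumps the leftmost entry of the row that is larger than x, which is then
  inserted into the next row; if no entry is larger, x is appended to the row.\<close>
fun row_insert :: "nat list list \<Rightarrow> nat \<Rightarrow> nat list list" where
  "row_insert [] x = [[x]]"
| "row_insert (r # rs) x =
     (let a = takeWhile (\<lambda>y. y \<le> x) r; b = dropWhile (\<lambda>y. y \<le> x) r in
      if b = [] then (r @ [x]) # rs
      else (a @ x # tl b) # row_insert rs (hd b))"

definition rsk_P :: "nat list \<Rightarrow> nat list list" where
  "rsk_P w = foldl row_insert [] w"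

definition rsk_shape :: "nat list \<Rightarrow> nat list" where
  "rsk_shape w = map length (rsk_P w)"

text \<open>i-th part (0-indexed) of a partition, padded with zeros.\<close>
definition part :: "nat list \<Rightarrow> nat \<Rightarrow> nat" where
  "part lam i = (if i < length lam then lam ! i else 0)"

definition adj_swap :: "nat list \<Rightarrow> nat \<Rightarrow> nat list" where
  "adj_swap xs p = xs[p := xs ! Suc p, Suc p := xs ! p]"

end

theory Submission
  imports Defs
begin


fun wpos :: "nat list \<Rightarrow> nat \<Rightarrow> nat" where
  "wpos [] x = 0"
| "wpos (h # t) x = (if h = x then 0 else Suc (wpos t x))"

lemma wpos_append: "wpos (u @ v) x = (if x \<in> set u then wpos u x else length u + wpos v x)"
  by (induction u) auto

lemma wpos_nth: "x \<in> set w \<Longrightarrow> wpos w x < length w \<and> w ! wpos w x = x"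
  by (induction w) auto

lemma wpos_inj: "s \<in> set w \<Longrightarrow> t \<in> set w \<Longrightarrow> wpos w s = wpos w t \<Longrightarrow> s = t"
  by (metis wpos_nth)

lemma wpos_swap:
  assumes "distinct (u @ a # b # v)"
  shows "wpos (u @ b # a # v) t = (if t = a then Suc (wpos (u @ a # b # v) a)
            else if t = b then wpos (u @ a # b # v) a else wpos (u @ a # b # v) t)"
    and "wpos (u @ a # b # v) b = Suc (wpos (u @ a # b # v) a)"
  using assms by (auto simp: wpos_append)

definition chain :: "nat list \<Rightarrow> nat set \<Rightarrow> bool" where
  "chain w C \<longleftrightarrow> C \<subseteq> set w \<and> (\<forall>a\<in>C. \<forall>b\<in>C. a < b \<longrightarrow> wpos w a < wpos w b)"

definition Ival :: "nat \<Rightarrow> nat list \<Rightarrow> nat" where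
  "Ival k w = Max ((\<lambda>C. card (\<Union>i<k. C i)) ` {C. \<forall>i<k. chain w (C i)})"

lemma chain_subset: "chain w C \<Longrightarrow> D \<subseteq> C \<Longrightarrow> chain w D"
  unfolding chain_def by blast

lemma Ival_fin: "finite ((\<lambda>C. card (\<Union>i<k. C i)) ` {C. \<forall>i<k. chain w (C i)})"
proof -
  have "(\<lambda>C. card (\<Union>i<k. C i)) ` {C. \<forall>i<k. chain w (C i)} \<subseteq> {..card (set w)}"
  proof
    fix n assume "n \<in> (\<lambda>C. card (\<Union>i<k. C i)) ` {C. \<forall>i<k. chain w (C i)}"
    then obtain C where C: "\<forall>i<k. chain w (C i)" "n = card (\<Union>i<k. C i)" by auto
    have "(\<Union>i<k. C i) \<subseteq> set w" using C(1) unfolding chain_def by auto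
    then show "n \<in> {..card (set w)}" using C(2) by (simp add: card_mono)
  qed
  then show ?thesis using finite_subset by blast
qed

lemma Ival_ge: "(\<And>i. i < k \<Longrightarrow> chain w (C i)) \<Longrightarrow> card (\<Union>i<k. C i) \<le> Ival k w"
  unfolding Ival_def using Ival_fin by (intro Max_ge) auto

lemma Ival_ex: "\<exists>C. (\<forall>i<k. chain w (C i)) \<and> card (\<Union>i<k. C i) = Ival k w"
proof -
  have "(\<lambda>_. {}) \<in> {C. \<forall>i<k. chain w (C i)}" by (auto simp: chain_def)
  then have "Ival k w \<in> (\<lambda>C. card (\<Union>i<k. C i)) ` {C. \<forall>i<k. chain w (C i)}"
    unfolding Ival_def using Ival_fin by (intro Max_in) auto
  then show ?thesis by auto
qed

lemma Ival_le_transfer: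
  assumes "\<And>C. (\<forall>i<k. chain w (C i)) \<Longrightarrow> \<exists>D. (\<forall>i<k. chain v (D i)) \<and> card (\<Union>i<k. C i) \<le> card (\<Union>i<k. D i) + e"
  shows "Ival k w \<le> Ival k v + e"
proof -
  obtain C where C: "\<forall>i<k. chain w (C i)" "card (\<Union>i<k. C i) = Ival k w" using Ival_ex by blast
  obtain D where D: "\<forall>i<k. chain v (D i)" "card (\<Union>i<k. C i) \<le> card (\<Union>i<k. D i) + e"
    using assms[OF C(1)] by blast
  have "card (\<Union>i<k. D i) \<le> Ival k v" using D(1) by (intro Ival_ge) auto
  then show ?thesis using C D by linarith
qed


lemma set_swap: "set (u @ b # a # v) = set (u @ a # b # v)" by auto

lemma chain_swap_back:
  assumes d: "distinct (u @ a # b # v)" and ab: "a < b" and c: "chain (u @ b # a # v) C"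
  shows "chain (u @ a # b # v) C"
proof -
  let ?w = "u @ a # b # v" let ?w' = "u @ b # a # v"
  note ps = wpos_swap[OF d]
  have sub: "C \<subseteq> set ?w" using c set_swap unfolding chain_def by metis
  have inj: "\<And>s t. s \<in> set ?w \<Longrightarrow> t \<in> set ?w \<Longrightarrow> wpos ?w s = wpos ?w t \<Longrightarrow> s = t"
    using wpos_inj by blast
  have "wpos ?w s < wpos ?w t" if "s \<in> C" "t \<in> C" "s < t" for s t
  proof -
    have h: "wpos ?w' s < wpos ?w' t" using c that unfolding chain_def by blast
    have st: "s \<in> set ?w" "t \<in> set ?w" using sub that by auto
    have ai: "a \<in> set ?w" "b \<in> set ?w" by auto
    show ?thesis
    proof (cases "s = a \<or> s = b \<or> t = a \<or> t = b")
      case False then show ?thesis using h ps by simp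
    next
      case True
      have n: "s \<noteq> a \<Longrightarrow> wpos ?w s \<noteq> wpos ?w a" "s \<noteq> b \<Longrightarrow> wpos ?w s \<noteq> wpos ?w b"
         "t \<noteq> a \<Longrightarrow> wpos ?w t \<noteq> wpos ?w a" "t \<noteq> b \<Longrightarrow> wpos ?w t \<noteq> wpos ?w b"
        using inj[OF st(1) ai(1)] inj[OF st(1) ai(2)] inj[OF st(2) ai(1)] inj[OF st(2) ai(2)] by auto
      show ?thesis
        using h ps(1)[of s] ps(1)[of t] ps(2) that ab n
        by (cases "s=a"; cases "s=b"; cases "t=a"; cases "t=b"; simp; linarith)
    qed
  qed
  then show ?thesis using sub unfolding chain_def by blast
qed

lemma chain_swap_fwd:
  assumes d: "distinct (u @ a # b # v)" and c: "chain (u @ a # b # v) C" and nab: "\<not> (a \<in> C \<and> b \<in> C)"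
  shows "chain (u @ b # a # v) C"
proof -
  let ?w = "u @ a # b # v" let ?w' = "u @ b # a # v"
  note ps = wpos_swap[OF d]
  have sub: "C \<subseteq> set ?w" using c unfolding chain_def by metis
  have inj: "\<And>s t. s \<in> set ?w \<Longrightarrow> t \<in> set ?w \<Longrightarrow> wpos ?w s = wpos ?w t \<Longrightarrow> s = t"
    using wpos_inj by blast
  have "wpos ?w' s < wpos ?w' t" if "s \<in> C" "t \<in> C" "s < t" for s t
  proof -
    have h: "wpos ?w s < wpos ?w t" using c that unfolding chain_def by blast
    have st: "s \<in> set ?w" "t \<in> set ?w" using sub that by auto
    have ai: "a \<in> set ?w" "b \<in> set ?w" by auto
    show ?thesis
    proof (cases "s = a \<or> s = b \<or> t = a \<or> t = b")
      case False then show ?thesis using h ps by simp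
    next
      case True
      have n: "s \<noteq> a \<Longrightarrow> wpos ?w s \<noteq> wpos ?w a" "s \<noteq> b \<Longrightarrow> wpos ?w s \<noteq> wpos ?w b"
         "t \<noteq> a \<Longrightarrow> wpos ?w t \<noteq> wpos ?w a" "t \<noteq> b \<Longrightarrow> wpos ?w t \<noteq> wpos ?w b"
        using inj[OF st(1) ai(1)] inj[OF st(1) ai(2)] inj[OF st(2) ai(1)] inj[OF st(2) ai(2)] by auto
      show ?thesis
        using h ps(1)[of s] ps(1)[of t] ps(2) that nab n
        by (cases "s=a"; cases "s=b"; cases "t=a"; cases "t=b"; simp; linarith)
    qed
  qed
  then show ?thesis using sub set_swap unfolding chain_def by metis
qed

lemma Ival_swap_le:
  assumes d: "distinct (u @ a # b # v)" and ab: "a < b"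
  shows "Ival k (u @ b # a # v) \<le> Ival k (u @ a # b # v)"
proof -
  have "Ival k (u @ b # a # v) \<le> Ival k (u @ a # b # v) + 0"
  proof (rule Ival_le_transfer)
    fix C assume "\<forall>i<k. chain (u @ b # a # v) (C i)"
    then have "\<forall>i<k. chain (u @ a # b # v) (C i)" using chain_swap_back[OF d ab] by blast
    then show "\<exists>D. (\<forall>i<k. chain (u @ a # b # v) (D i)) \<and> card (\<Union>i<k. C i) \<le> card (\<Union>i<k. D i) + 0"
      by auto
  qed
  then show ?thesis by simp
qed

lemma card_Diff1_ge: "finite A \<Longrightarrow> card A \<le> card (A - {x}) + 1"
proof -
  assume f: "finite A"
  have "card A \<le> card (insert x (A - {x}))" using f by (intro card_mono) auto
  also have "\<dots> = card (A - {x}) + 1" using f by (subst card_insert_disjoint) auto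
  finally show ?thesis .
qed

lemma Ival_swap_ge:
  assumes d: "distinct (u @ a # b # v)"
  shows "Ival k (u @ a # b # v) \<le> Ival k (u @ b # a # v) + 1"
proof (rule Ival_le_transfer)
  fix C assume C: "\<forall>i<k. chain (u @ a # b # v) (C i)"
  let ?D = "\<lambda>i. C i - {a}"
  have "\<forall>i<k. chain (u @ b # a # v) (?D i)"
  proof (intro allI impI)
    fix i assume "i < k"
    then have "chain (u @ a # b # v) (C i - {a})" using C chain_subset[of _ "C i" "C i - {a}"] by auto
    then show "chain (u @ b # a # v) (C i - {a})" using chain_swap_fwd[OF d, of "C i - {a}"] by auto
  qed
  moreover have "card (\<Union>i<k. C i) \<le> card (\<Union>i<k. ?D i) + 1"
  proof -
    have "(\<Union>i<k. ?D i) = (\<Union>i<k. C i) - {a}" by auto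
    moreover have "card ((\<Union>i<k. C i) - {a}) + 1 \<ge> card (\<Union>i<k. C i)"
    proof -
      have "(\<Union>i<k. C i) \<subseteq> set (u @ a # b # v)" using C unfolding chain_def by blast
      then have fin: "finite (\<Union>i<k. C i)" by (rule finite_subset) auto
      show ?thesis using card_Diff1_ge[OF fin, of a] by simp
    qed
    ultimately show ?thesis by (simp only:)
  qed
  ultimately show "\<exists>D. (\<forall>i<k. chain (u @ b # a # v) (D i)) \<and> card (\<Union>i<k. C i) \<le> card (\<Union>i<k. D i) + 1"
    by (intro exI[of _ ?D] conjI)
qed


lemma chain_union:
  assumes "chain w A" "chain w B" "\<And>x y. x \<in> A \<Longrightarrow> y \<in> B \<Longrightarrow> x < y \<and> wpos w x < wpos w y"
  shows "chain w (A \<union> B)"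
  using assms unfolding chain_def
  by (metis Un_iff le_sup_iff not_less_iff_gr_or_eq)

lemma disjointify:
  fixes k :: nat and C :: "nat \<Rightarrow> nat set"
  assumes "\<forall>i<k. chain w (C i)"
  shows "\<exists>D. (\<forall>i<k. chain w (D i)) \<and> (\<Union>i<k. D i) = (\<Union>i<k. C i)
           \<and> (\<forall>i<k. \<forall>j<k. i \<noteq> j \<longrightarrow> D i \<inter> D j = {})"
proof -
  define D where "D i = C i - (\<Union>l<i. C l)" for i
  have c: "\<forall>i<k. chain w (D i)" using assms chain_subset[of w "C _" "D _"] unfolding D_def by blast
  have u: "(\<Union>i<n. D i) = (\<Union>i<n. C i)" for n :: nat
  proof (induction n)
    case (Suc n) then show ?case by (simp add: D_def lessThan_Suc)
  qed simp
  have dj: "D i \<inter> D j = {}" if "i \<noteq> j" for i j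
  proof (cases "i < j")
    case True
    have "D j \<inter> C i = {}" unfolding D_def using True by blast
    moreover have "D i \<subseteq> C i" unfolding D_def by blast
    ultimately show ?thesis by blast
  next
    case False then have ji: "j < i" using that by simp
    have "D i \<inter> C j = {}" unfolding D_def using ji by blast
    moreover have "D j \<subseteq> C j" unfolding D_def by blast
    ultimately show ?thesis by blast
  qed
  show ?thesis using c u[of k] dj by (intro exI[of _ D]) simp
qed

lemma UN_upd2:
  fixes k :: nat
  assumes "i < k" "l < k" "i \<noteq> l" "S' \<union> T' = C i \<union> C l"
  shows "(\<Union>j<k. (C(i := S', l := T')) j) = (\<Union>j<k. C j)"
proof
  show "(\<Union>j<k. (C(i := S', l := T')) j) \<subseteq> (\<Union>j<k. C j)"
  proof
    fix x assume "x \<in> (\<Union>j<k. (C(i := S', l := T')) j)"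
    then obtain j where j: "j < k" "x \<in> (C(i := S', l := T')) j" by blast
    show "x \<in> (\<Union>j<k. C j)"
    proof (cases "j = i \<or> j = l")
      case True
      then have "x \<in> C i \<union> C l" using j assms by (auto split: if_splits)
      then show ?thesis using assms by blast
    next
      case False then show ?thesis using j by auto
    qed
  qed
next
  show "(\<Union>j<k. C j) \<subseteq> (\<Union>j<k. (C(i := S', l := T')) j)"
  proof
    fix x assume "x \<in> (\<Union>j<k. C j)"
    then obtain j where j: "j < k" "x \<in> C j" by blast
    show "x \<in> (\<Union>j<k. (C(i := S', l := T')) j)"
    proof (cases "j = i \<or> j = l")
      case True
      then have "x \<in> S' \<union> T'" using j assms by auto
      then have "x \<in> (C(i := S', l := T')) i \<or> x \<in> (C(i := S', l := T')) l" using assms by auto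
      then show ?thesis using assms by blast
    next
      case False then show ?thesis using j by (intro UN_I[of j]) auto
    qed
  qed
qed


lemma chain_le: "chain w S \<Longrightarrow> x \<in> S \<Longrightarrow> y \<in> S \<Longrightarrow> x \<le> y \<Longrightarrow> wpos w x \<le> wpos w y"
  unfolding chain_def by (metis le_eq_less_or_eq less_imp_le)

lemma chain_lt: "chain w S \<Longrightarrow> x \<in> S \<Longrightarrow> y \<in> S \<Longrightarrow> x < y \<Longrightarrow> wpos w x < wpos w y"
  unfolding chain_def by blast

lemma chain_fin: "chain w S \<Longrightarrow> finite S"
  unfolding chain_def using finite_subset by (metis List.finite_set)

lemma chain_set: "chain w S \<Longrightarrow> x \<in> S \<Longrightarrow> x \<in> set w"
  unfolding chain_def by blast

lemma UN_fin: "\<forall>i<(k::nat). chain w (C i) \<Longrightarrow> finite (\<Union>i<k. C i)"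
  using chain_fin by auto

lemma chain_split:
  assumes "chain w S" "a \<in> S" "b \<in> S" "wpos w b = Suc (wpos w a)" "s \<in> S"
  shows "s < a \<or> s = a \<or> s = b \<or> b < s"
proof (rule ccontr)
  assume "\<not> ?thesis"
  then have "a < s" "s < b" by auto
  then have "wpos w a < wpos w s" "wpos w s < wpos w b" using assms chain_lt by blast+
  then show False using assms(4) by simp
qed


lemma surgery_K1:
  fixes k :: nat and C :: "nat \<Rightarrow> nat set"
  assumes d: "distinct w" and mem: "a \<in> set w" "b \<in> set w" "m \<in> set w"
    and ord: "a < m" "m < b" and pab: "wpos w b = Suc (wpos w a)" and pm: "Suc (wpos w m) = wpos w a"
    and C: "\<forall>i<k. chain w (C i)"
  shows "\<exists>D. (\<forall>i<k. chain w (D i) \<and> \<not> (a \<in> D i \<and> b \<in> D i)) \<and> card (\<Union>i<k. C i) \<le> card (\<Union>i<k. D i)"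
proof -
  obtain E where E: "\<forall>i<k. chain w (E i)" "(\<Union>i<k. E i) = (\<Union>i<k. C i)"
      "\<forall>i<k. \<forall>j<k. i \<noteq> j \<longrightarrow> E i \<inter> E j = {}"
    using disjointify[OF C] by (elim exE conjE) (rule that)
  let ?U = "\<Union>i<k. E i"
  have inj: "\<And>s t. s \<in> set w \<Longrightarrow> t \<in> set w \<Longrightarrow> s \<noteq> t \<Longrightarrow> wpos w s \<noteq> wpos w t"
    using wpos_inj by metis
  show ?thesis
  proof (cases "\<exists>i<k. a \<in> E i \<and> b \<in> E i")
    case False
    then show ?thesis using E by (intro exI[of _ E]) simp
  next
    case True
    then obtain i where i: "i < k" "a \<in> E i" "b \<in> E i" by blast
    have Ei: "chain w (E i)" using E(1) i(1) by simp
    have oth: "a \<notin> E j \<and> b \<notin> E j" if "j < k" "j \<noteq> i" for j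
    proof -
      have "E j \<inter> E i = {}" using E(3) that i(1) by simp
      then show ?thesis using i by blast
    qed
    have mEi: "m \<notin> E i"
    proof
      assume "m \<in> E i"
      then have "wpos w a < wpos w m" using chain_lt[OF Ei i(2) _ ord(1)] by blast
      then show False using pm by simp
    qed
    have spl: "\<And>s. s \<in> E i \<Longrightarrow> s < a \<or> s = a \<or> s = b \<or> b < s"
      using chain_split[OF Ei i(2,3) pab] by blast
    show ?thesis
    proof (cases "\<exists>l<k. m \<in> E l")
      case False
      define D where "D = E(i := E i - {a} \<union> {m})"
      have chD: "chain w (E i - {a} \<union> {m})"
        unfolding chain_def
      proof (intro conjI ballI impI)
        show "E i - {a} \<union> {m} \<subseteq> set w" using Ei mem unfolding chain_def by blast
      next
        fix x y assume xy: "x \<in> E i - {a} \<union> {m}" "y \<in> E i - {a} \<union> {m}" "x < y"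
        show "wpos w x < wpos w y"
        proof (cases "x = m")
          case True
          then have "y \<in> E i" "y \<noteq> a" using xy ord mEi by auto
          then have "y = b \<or> b < y" using spl xy ord True by fastforce
          then have "wpos w b \<le> wpos w y" using chain_le[OF Ei i(3) \<open>y \<in> E i\<close>] by auto
          then show ?thesis using True pab pm by simp
        next
          case False
          then have x: "x \<in> E i" "x \<noteq> a" using xy by auto
          show ?thesis
          proof (cases "y = m")
            case True
            then have "x < a" using spl[OF x(1)] x xy ord by auto
            then have "wpos w x < wpos w a" using chain_lt[OF Ei x(1) i(2)] by blast
            moreover have "wpos w x \<noteq> wpos w m" using inj[of x m] chain_set[OF Ei x(1)] mem x(1) mEi by blast
            ultimately show ?thesis using True pm by simp
          next
            case False
            then have "y \<in> E i" using xy by auto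
            then show ?thesis using chain_lt[OF Ei x(1) _ xy(3)] by blast
          qed
        qed
      qed
      have Dch: "\<forall>j<k. chain w (D j) \<and> \<not> (a \<in> D j \<and> b \<in> D j)"
        using E(1) oth chD ord unfolding D_def by auto
      have finD: "finite (\<Union>j<k. D j)" using UN_fin Dch by blast
      have finU: "finite ?U" using UN_fin E(1) by blast
      have sub: "insert m (?U - {a}) \<subseteq> (\<Union>j<k. D j)"
      proof
        fix x assume "x \<in> insert m (?U - {a})"
        then consider "x = m" | j where "j < k" "x \<in> E j" "x \<noteq> a" by blast
        then show "x \<in> (\<Union>j<k. D j)"
        proof cases
          case 1 then show ?thesis using i unfolding D_def by (intro UN_I[of i]) auto
        next
          case 2 then show ?thesis unfolding D_def by (intro UN_I[of j]) auto
        qed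
      qed
      have "m \<notin> ?U" using False by blast
      then have "card (insert m (?U - {a})) = card (?U - {a}) + 1"
        using finU by (subst card_insert_disjoint) auto
      moreover have "card ?U \<le> card (?U - {a}) + 1" using card_Diff1_ge[OF finU] by blast
      moreover have "card (insert m (?U - {a})) \<le> card (\<Union>j<k. D j)" using card_mono[OF finD sub] .
      ultimately show ?thesis using Dch E(2) by (intro exI[of _ D]) simp
    next
      case True
      then obtain l where l: "l < k" "m \<in> E l" by blast
      have li: "l \<noteq> i" using l mEi by blast
      have El: "chain w (E l)" using E(1) l(1) by simp
      have abT: "a \<notin> E l" "b \<notin> E l" using oth l li by auto
      define S' where "S' = {s \<in> E i. s \<le> a} \<union> {t \<in> E l. m < t}"
      define T' where "T' = {t \<in> E l. t \<le> m} \<union> {s \<in> E i. b \<le> s}"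
      define D where "D = E(i := S', l := T')"
      have un: "S' \<union> T' = E i \<union> E l"
      proof
        show "S' \<union> T' \<subseteq> E i \<union> E l" unfolding S'_def T'_def by blast
      next
        show "E i \<union> E l \<subseteq> S' \<union> T'"
        proof
          fix x assume "x \<in> E i \<union> E l"
          then show "x \<in> S' \<union> T'"
          proof
            assume "x \<in> E i" then show ?thesis using spl[of x] unfolding S'_def T'_def by auto
          next
            assume "x \<in> E l" then show ?thesis unfolding S'_def T'_def by auto
          qed
        qed
      qed
      have chS: "chain w S'" unfolding S'_def
      proof (rule chain_union)
        show "chain w {s \<in> E i. s \<le> a}" by (rule chain_subset[OF Ei]) blast
        show "chain w {t \<in> E l. m < t}" by (rule chain_subset[OF El]) blast
      next
        fix x y assume x: "x \<in> {s \<in> E i. s \<le> a}" and y: "y \<in> {t \<in> E l. m < t}"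
        have "wpos w x \<le> wpos w a" using chain_le[OF Ei _ i(2)] x by blast
        moreover have "wpos w m < wpos w y" using chain_lt[OF El l(2)] y by blast
        moreover have "wpos w y \<noteq> wpos w a" using inj[of y a] chain_set[OF El] y mem abT by blast
        ultimately show "x < y \<and> wpos w x < wpos w y" using x y ord pm by auto
      qed
      have chT: "chain w T'" unfolding T'_def
      proof (rule chain_union)
        show "chain w {t \<in> E l. t \<le> m}" by (rule chain_subset[OF El]) blast
        show "chain w {s \<in> E i. b \<le> s}" by (rule chain_subset[OF Ei]) blast
      next
        fix x y assume x: "x \<in> {t \<in> E l. t \<le> m}" and y: "y \<in> {s \<in> E i. b \<le> s}"
        have "wpos w x \<le> wpos w m" using chain_le[OF El _ l(2)] x by blast
        moreover have "wpos w b \<le> wpos w y" using chain_le[OF Ei i(3)] y by blast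
        ultimately show "x < y \<and> wpos w x < wpos w y" using x y ord pm pab by auto
      qed
      have nS: "\<not> (a \<in> S' \<and> b \<in> S')" using abT ord unfolding S'_def by auto
      have nT: "\<not> (a \<in> T' \<and> b \<in> T')" using abT ord unfolding T'_def by auto
      have Dch: "\<forall>j<k. chain w (D j) \<and> \<not> (a \<in> D j \<and> b \<in> D j)"
        using E(1) oth chS chT nS nT li unfolding D_def by auto
      have "(\<Union>j<k. D j) = ?U" unfolding D_def using UN_upd2[OF i(1) l(1) li[symmetric] un] .
      then show ?thesis using Dch E(2) by (intro exI[of _ D]) simp
    qed
  qed
qed


lemma surgery_K2:
  fixes k :: nat and C :: "nat \<Rightarrow> nat set"
  assumes d: "distinct w" and mem: "a \<in> set w" "b \<in> set w" "m \<in> set w"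
    and ord: "a < m" "m < b" and pab: "wpos w b = Suc (wpos w a)" and pm: "wpos w m = Suc (wpos w b)"
    and C: "\<forall>i<k. chain w (C i)"
  shows "\<exists>D. (\<forall>i<k. chain w (D i) \<and> \<not> (a \<in> D i \<and> b \<in> D i)) \<and> card (\<Union>i<k. C i) \<le> card (\<Union>i<k. D i)"
proof -
  obtain E where E: "\<forall>i<k. chain w (E i)" "(\<Union>i<k. E i) = (\<Union>i<k. C i)"
      "\<forall>i<k. \<forall>j<k. i \<noteq> j \<longrightarrow> E i \<inter> E j = {}"
    using disjointify[OF C] by (elim exE conjE) (rule that)
  let ?U = "\<Union>i<k. E i"
  have inj: "\<And>s t. s \<in> set w \<Longrightarrow> t \<in> set w \<Longrightarrow> s \<noteq> t \<Longrightarrow> wpos w s \<noteq> wpos w t"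
    using wpos_inj by metis
  show ?thesis
  proof (cases "\<exists>i<k. a \<in> E i \<and> b \<in> E i")
    case False
    then show ?thesis using E by (intro exI[of _ E]) simp
  next
    case True
    then obtain i where i: "i < k" "a \<in> E i" "b \<in> E i" by blast
    have Ei: "chain w (E i)" using E(1) i(1) by simp
    have oth: "a \<notin> E j \<and> b \<notin> E j" if "j < k" "j \<noteq> i" for j
    proof -
      have "E j \<inter> E i = {}" using E(3) that i(1) by simp
      then show ?thesis using i by blast
    qed
    have mEi: "m \<notin> E i"
    proof
      assume "m \<in> E i"
      then have "wpos w m < wpos w b" using chain_lt[OF Ei _ i(3) ord(2)] by blast
      then show False using pm by simp
    qed
    have spl: "\<And>s. s \<in> E i \<Longrightarrow> s < a \<or> s = a \<or> s = b \<or> b < s"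
      using chain_split[OF Ei i(2,3) pab] by blast
    show ?thesis
    proof (cases "\<exists>l<k. m \<in> E l")
      case False
      define D where "D = E(i := E i - {b} \<union> {m})"
      have chD: "chain w (E i - {b} \<union> {m})"
        unfolding chain_def
      proof (intro conjI ballI impI)
        show "E i - {b} \<union> {m} \<subseteq> set w" using Ei mem unfolding chain_def by blast
      next
        fix x y assume xy: "x \<in> E i - {b} \<union> {m}" "y \<in> E i - {b} \<union> {m}" "x < y"
        show "wpos w x < wpos w y"
        proof (cases "x = m")
          case True
          then have y: "y \<in> E i" "y \<noteq> b" using xy ord mEi by auto
          then have "b < y" using spl xy ord True by fastforce
          then have "wpos w b < wpos w y" using chain_lt[OF Ei i(3) y(1)] by auto
          moreover have "wpos w y \<noteq> wpos w m" using inj[of y m] chain_set[OF Ei y(1)] mem y(1) mEi by blast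
          ultimately show ?thesis using True pab pm by simp
        next
          case False
          then have x: "x \<in> E i" "x \<noteq> b" using xy by auto
          show ?thesis
          proof (cases "y = m")
            case True
            then have "x \<le> a" using spl[OF x(1)] x xy ord by auto
            then have "wpos w x \<le> wpos w a" using chain_le[OF Ei x(1) i(2)] by blast
            then show ?thesis using True pm pab by simp
          next
            case False
            then have "y \<in> E i" using xy by auto
            then show ?thesis using chain_lt[OF Ei x(1) _ xy(3)] by blast
          qed
        qed
      qed
      have Dch: "\<forall>j<k. chain w (D j) \<and> \<not> (a \<in> D j \<and> b \<in> D j)"
        using E(1) oth chD ord unfolding D_def by auto
      have finD: "finite (\<Union>j<k. D j)" using UN_fin Dch by blast
      have finU: "finite ?U" using UN_fin E(1) by blast
      have sub: "insert m (?U - {b}) \<subseteq> (\<Union>j<k. D j)"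
      proof
        fix x assume "x \<in> insert m (?U - {b})"
        then consider "x = m" | j where "j < k" "x \<in> E j" "x \<noteq> b" by blast
        then show "x \<in> (\<Union>j<k. D j)"
        proof cases
          case 1 then show ?thesis using i unfolding D_def by (intro UN_I[of i]) auto
        next
          case 2 then show ?thesis unfolding D_def by (intro UN_I[of j]) auto
        qed
      qed
      have "m \<notin> ?U" using False by blast
      then have "card (insert m (?U - {b})) = card (?U - {b}) + 1"
        using finU by (subst card_insert_disjoint) auto
      moreover have "card ?U \<le> card (?U - {b}) + 1" using card_Diff1_ge[OF finU] by blast
      moreover have "card (insert m (?U - {b})) \<le> card (\<Union>j<k. D j)" using card_mono[OF finD sub] .
      ultimately show ?thesis using Dch E(2) by (intro exI[of _ D]) simp
    next
      case True
      then obtain l where l: "l < k" "m \<in> E l" by blast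
      have li: "l \<noteq> i" using l mEi by blast
      have El: "chain w (E l)" using E(1) l(1) by simp
      have abT: "a \<notin> E l" "b \<notin> E l" using oth l li by auto
      define S' where "S' = {s \<in> E i. s \<le> a} \<union> {t \<in> E l. m \<le> t}"
      define T' where "T' = {t \<in> E l. t < m} \<union> {s \<in> E i. b \<le> s}"
      define D where "D = E(i := S', l := T')"
      have un: "S' \<union> T' = E i \<union> E l"
      proof
        show "S' \<union> T' \<subseteq> E i \<union> E l" unfolding S'_def T'_def by blast
      next
        show "E i \<union> E l \<subseteq> S' \<union> T'"
        proof
          fix x assume "x \<in> E i \<union> E l"
          then show "x \<in> S' \<union> T'"
          proof
            assume "x \<in> E i" then show ?thesis using spl[of x] unfolding S'_def T'_def by auto
          next
            assume "x \<in> E l" then show ?thesis unfolding S'_def T'_def by auto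
          qed
        qed
      qed
      have chS: "chain w S'" unfolding S'_def
      proof (rule chain_union)
        show "chain w {s \<in> E i. s \<le> a}" by (rule chain_subset[OF Ei]) blast
        show "chain w {t \<in> E l. m \<le> t}" by (rule chain_subset[OF El]) blast
      next
        fix x y assume x: "x \<in> {s \<in> E i. s \<le> a}" and y: "y \<in> {t \<in> E l. m \<le> t}"
        have "wpos w x \<le> wpos w a" using chain_le[OF Ei _ i(2)] x by blast
        moreover have "wpos w m \<le> wpos w y" using chain_le[OF El l(2)] y by blast
        ultimately show "x < y \<and> wpos w x < wpos w y" using x y ord pm pab by auto
      qed
      have chT: "chain w T'" unfolding T'_def
      proof (rule chain_union)
        show "chain w {t \<in> E l. t < m}" by (rule chain_subset[OF El]) blast
        show "chain w {s \<in> E i. b \<le> s}" by (rule chain_subset[OF Ei]) blast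
      next
        fix x y assume x: "x \<in> {t \<in> E l. t < m}" and y: "y \<in> {s \<in> E i. b \<le> s}"
        have "wpos w x < wpos w m" using chain_lt[OF El _ l(2)] x by blast
        moreover have "wpos w b \<le> wpos w y" using chain_le[OF Ei i(3)] y by blast
        moreover have "wpos w x \<noteq> wpos w b" using inj[of x b] chain_set[OF El] x mem abT by blast
        ultimately show "x < y \<and> wpos w x < wpos w y" using x y ord pm pab by auto
      qed
      have nS: "\<not> (a \<in> S' \<and> b \<in> S')" using abT ord unfolding S'_def by auto
      have nT: "\<not> (a \<in> T' \<and> b \<in> T')" using abT ord unfolding T'_def by auto
      have Dch: "\<forall>j<k. chain w (D j) \<and> \<not> (a \<in> D j \<and> b \<in> D j)"
        using E(1) oth chS chT nS nT li unfolding D_def by auto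
      have "(\<Union>j<k. D j) = ?U" unfolding D_def using UN_upd2[OF i(1) l(1) li[symmetric] un] .
      then show ?thesis using Dch E(2) by (intro exI[of _ D]) simp
    qed
  qed
qed


inductive kstep :: "nat list \<Rightarrow> nat list \<Rightarrow> bool" where
  k1: "x < y \<Longrightarrow> y < z \<Longrightarrow> kstep (u @ [y, x, z] @ v) (u @ [y, z, x] @ v)"
| k2: "x < y \<Longrightarrow> y < z \<Longrightarrow> kstep (u @ [x, z, y] @ v) (u @ [z, x, y] @ v)"

definition keq :: "nat list \<Rightarrow> nat list \<Rightarrow> bool" where
  "keq = (\<lambda>u v. kstep u v \<or> kstep v u)\<^sup>*\<^sup>*"

lemma kstep_set: "kstep u v \<Longrightarrow> set u = set v \<and> length u = length v"
  by (induction rule: kstep.induct) auto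

lemma kstep_distinct: "kstep u v \<Longrightarrow> distinct u \<longleftrightarrow> distinct v"
  using kstep_set card_distinct distinct_card by metis

lemma kstep_ctx: "kstep u v \<Longrightarrow> kstep (p @ u @ q) (p @ v @ q)"
proof (induction rule: kstep.induct)
  case (k1 x y z u v)
  then show ?case using kstep.k1[of x y z "p @ u" "v @ q"] by simp
next
  case (k2 x y z u v)
  then show ?case using kstep.k2[of x y z "p @ u" "v @ q"] by simp
qed

lemma keq_refl: "keq u u" unfolding keq_def by simp

lemma keq_sym: "keq u v \<Longrightarrow> keq v u"
proof -
  have "symp (\<lambda>u v. kstep u v \<or> kstep v u)" by (auto intro: sympI)
  then have "symp (\<lambda>u v. kstep u v \<or> kstep v u)\<^sup>*\<^sup>*" by (rule symp_rtranclp)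
  then show "keq u v \<Longrightarrow> keq v u" unfolding keq_def by (meson sympD)
qed

lemma keq_trans: "keq u v \<Longrightarrow> keq v w \<Longrightarrow> keq u w"
  unfolding keq_def by (rule rtranclp_trans)

lemma keq_step: "kstep u v \<Longrightarrow> keq u v"
  unfolding keq_def by auto

lemma keq_ctx: "keq u v \<Longrightarrow> keq (p @ u @ q) (p @ v @ q)"
  unfolding keq_def
proof (induction rule: rtranclp_induct)
  case base then show ?case by simp
next
  case (step y z)
  then have r: "(\<lambda>u v. kstep u v \<or> kstep v u) (p @ y @ q) (p @ z @ q)" using kstep_ctx by blast
  show ?case by (rule rtranclp.rtrancl_into_rtrancl[OF step(3) r])
qed

lemma Ival_swap_surg:
  assumes d: "distinct (u @ a # b # v)" and ord: "a < m" "m < b" and mem: "m \<in> set (u @ a # b # v)"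
    and K: "Suc (wpos (u @ a # b # v) m) = wpos (u @ a # b # v) a \<or> wpos (u @ a # b # v) m = Suc (wpos (u @ a # b # v) b)"
  shows "Ival k (u @ a # b # v) \<le> Ival k (u @ b # a # v)"
proof -
  let ?w = "u @ a # b # v"
  have pab: "wpos ?w b = Suc (wpos ?w a)" using wpos_swap(2)[OF d] .
  have "Ival k ?w \<le> Ival k (u @ b # a # v) + 0"
  proof (rule Ival_le_transfer)
    fix C assume C: "\<forall>i<k. chain ?w (C i)"
    have "\<exists>D. (\<forall>i<k. chain ?w (D i) \<and> \<not> (a \<in> D i \<and> b \<in> D i)) \<and> card (\<Union>i<k. C i) \<le> card (\<Union>i<k. D i)"
    proof (cases "Suc (wpos ?w m) = wpos ?w a")
      case True
      show ?thesis by (rule surgery_K1[OF d _ _ mem ord pab True C]) auto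
    next
      case False
      then have pm: "wpos ?w m = Suc (wpos ?w b)" using K by blast
      show ?thesis by (rule surgery_K2[OF d _ _ mem ord pab pm C]) auto
    qed
    then obtain D where D: "\<forall>i<k. chain ?w (D i) \<and> \<not> (a \<in> D i \<and> b \<in> D i)" "card (\<Union>i<k. C i) \<le> card (\<Union>i<k. D i)"
      by blast
    have "\<forall>i<k. chain (u @ b # a # v) (D i)" using D(1) chain_swap_fwd[OF d] by blast
    then show "\<exists>D. (\<forall>i<k. chain (u @ b # a # v) (D i)) \<and> card (\<Union>i<k. C i) \<le> card (\<Union>i<k. D i) + 0"
      using D(2) by auto
  qed
  then show ?thesis by simp
qed

lemma kstep_Ival: "kstep w w' \<Longrightarrow> distinct w \<Longrightarrow> Ival k w = Ival k w'"
proof (induction rule: kstep.induct)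
  case (k1 x y z u v)
  let ?u = "u @ [y]"
  have e1: "u @ [y, x, z] @ v = ?u @ x # z # v" and e2: "u @ [y, z, x] @ v = ?u @ z # x # v" by simp_all
  have d: "distinct (?u @ x # z # v)" using k1 by simp
  have "Ival k (?u @ z # x # v) \<le> Ival k (?u @ x # z # v)"
    using Ival_swap_le[OF d] k1 by simp
  moreover have "Ival k (?u @ x # z # v) \<le> Ival k (?u @ z # x # v)"
    using d k1 by (intro Ival_swap_surg[where m = y]) (auto simp: wpos_append)
  ultimately show ?case unfolding e1 e2 by simp
next
  case (k2 x y z u v)
  have e1: "u @ [x, z, y] @ v = u @ x # z # (y # v)" and e2: "u @ [z, x, y] @ v = u @ z # x # (y # v)" by simp_all
  have d: "distinct (u @ x # z # (y # v))" using k2 by simp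
  have "Ival k (u @ z # x # (y # v)) \<le> Ival k (u @ x # z # (y # v))"
    using Ival_swap_le[OF d] k2 by simp
  moreover have "Ival k (u @ x # z # (y # v)) \<le> Ival k (u @ z # x # (y # v))"
    using d k2 by (intro Ival_swap_surg[where m = y]) (auto simp: wpos_append)
  ultimately show ?case unfolding e1 e2 by simp
qed

lemma keq_Ival: "keq u v \<Longrightarrow> distinct u \<Longrightarrow> Ival k u = Ival k v \<and> distinct v"
  unfolding keq_def
proof (induction rule: rtranclp_induct)
  case base then show ?case by simp
next
  case (step y z)
  then show ?case using kstep_Ival kstep_distinct by metis
qed


fun reading :: "nat list list \<Rightarrow> nat list" where
  "reading [] = []"
| "reading (r # T) = reading T @ r"

definition rcompat :: "nat list \<Rightarrow> nat list \<Rightarrow> bool" where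
  "rcompat r s \<longleftrightarrow> length s \<le> length r \<and> (\<forall>c<length s. r ! c < s ! c)"

fun tab :: "nat list list \<Rightarrow> bool" where
  "tab [] = True"
| "tab (r # T) = (sorted_wrt (<) r \<and> tab T \<and> (case T of [] \<Rightarrow> True | s # _ \<Rightarrow> rcompat r s))"

abbreviation tw :: "nat list \<Rightarrow> nat \<Rightarrow> nat" where
  "tw r x \<equiv> length (takeWhile (\<lambda>y. y \<le> x) r)"

lemma row_insert_Cons:
  "row_insert (r # rs) x = (if tw r x = length r then (r @ [x]) # rs
      else r[tw r x := x] # row_insert rs (r ! tw r x))"
proof (cases "tw r x = length r")
  case True
  then have "dropWhile (\<lambda>y. y \<le> x) r = []" by (simp add: dropWhile_eq_drop)
  moreover have "takeWhile (\<lambda>y. y \<le> x) r = r" using True by (metis takeWhile_eq_take take_all order_refl)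
  ultimately show ?thesis using True by simp
next
  case False
  then have lt: "tw r x < length r" using length_takeWhile_le le_neq_implies_less by blast
  have "dropWhile (\<lambda>y. y \<le> x) r \<noteq> []" using lt by (simp add: dropWhile_eq_drop)
  moreover have "takeWhile (\<lambda>y. y \<le> x) r @ x # tl (dropWhile (\<lambda>y. y \<le> x) r) = r[tw r x := x]"
    using lt by (metis dropWhile_eq_drop takeWhile_eq_take upd_conv_take_nth_drop drop_Suc tl_drop)
  moreover have "hd (dropWhile (\<lambda>y. y \<le> x) r) = r ! tw r x"
    using lt by (simp add: dropWhile_eq_drop hd_drop_conv_nth)
  ultimately show ?thesis using False by (auto simp: Let_def)
qed

declare row_insert.simps(2)[simp del]

lemma set_upd_nth: "q < length r \<Longrightarrow> insert (r ! q) (set (r[q := x])) = insert x (set r)"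
proof -
  assume q: "q < length r"
  have "r = take q r @ r ! q # drop (Suc q) r" using q by (simp add: id_take_nth_drop)
  moreover have "r[q := x] = take q r @ x # drop (Suc q) r" using q by (simp add: upd_conv_take_nth_drop)
  ultimately show ?thesis by (metis insert_commute list.simps(15) set_append Un_insert_right)
qed

lemma row_insert_set: "set (concat (row_insert T x)) = insert x (set (concat T))
   \<and> length (concat (row_insert T x)) = Suc (length (concat T))"
proof (induction T arbitrary: x)
  case Nil then show ?case by simp
next
  case (Cons r rs)
  show ?case
  proof (cases "tw r x = length r")
    case True then show ?thesis by (simp add: row_insert_Cons)
  next
    case False
    then have lt: "tw r x < length r" using length_takeWhile_le le_neq_implies_less by blast
    have "set (concat (row_insert (r # rs) x)) = set (r[tw r x := x]) \<union> insert (r ! tw r x) (set (concat rs))"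
      using False Cons[of "r ! tw r x"] by (simp add: row_insert_Cons)
    also have "\<dots> = insert x (set r) \<union> set (concat rs)" using set_upd_nth[OF lt, of x] by auto
    finally show ?thesis using False Cons[of "r ! tw r x"] by (simp add: row_insert_Cons)
  qed
qed

lemma row_insert_distinct:
  assumes "distinct (concat T)" "x \<notin> set (concat T)"
  shows "distinct (concat (row_insert T x))"
proof -
  have "card (set (concat (row_insert T x))) = card (insert x (set (concat T)))"
    using row_insert_set[of T x] by (simp only:)
  also have "\<dots> = Suc (card (set (concat T)))" using assms(2) by (rule card_insert_disjoint[OF List.finite_set])
  also have "\<dots> = Suc (length (concat T))" using distinct_card[OF assms(1)] by (simp only:)
  also have "\<dots> = length (concat (row_insert T x))" using row_insert_set[of T x] by (simp only:)
  finally have "card (set (concat (row_insert T x))) = length (concat (row_insert T x))" .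
  then show ?thesis by (rule card_distinct)
qed

lemma tw_le: "i < tw r x \<Longrightarrow> r ! i \<le> x"
  by (metis nth_mem set_takeWhileD takeWhile_nth)

lemma tw_gt: "sorted_wrt (<) r \<Longrightarrow> tw r x \<le> i \<Longrightarrow> i < length r \<Longrightarrow> x < r ! i"
proof -
  assume s: "sorted_wrt (<) r" and i: "tw r x \<le> i" "i < length r"
  then have lt: "tw r x < length r" by simp
  then have "x < r ! tw r x" using nth_length_takeWhile[OF lt] by simp
  moreover have "r ! tw r x \<le> r ! i" using s i by (metis le_eq_less_or_eq sorted_wrt_nth_less order.strict_implies_order)
  ultimately show ?thesis by simp
qed

lemma tw_full: "tw r x = length r \<Longrightarrow> y \<in> set r \<Longrightarrow> y \<le> x"
  by (metis in_set_conv_nth tw_le)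


lemma sorted_upd:
  assumes s: "sorted_wrt (<) r" and lt: "tw r x < length r" and xn: "x \<notin> set r"
  shows "sorted_wrt (<) (r[tw r x := x])"
proof -
  let ?q = "tw r x"
  have "r[?q := x] ! i < r[?q := x] ! j" if ij: "i < j" "j < length r" for i j
  proof -
    have rij: "r ! i < r ! j" using s ij by (simp add: sorted_wrt_iff_nth_less)
    show ?thesis
    proof (cases "i = ?q")
      case True
      then have "x < r ! j" using tw_gt[OF s, of x j] ij by simp
      then show ?thesis using True ij lt by simp
    next
      case False
      note iq = False
      show ?thesis
      proof (cases "j = ?q")
        case True
        then have "r ! i \<le> x" using tw_le[where i=i and r=r and x=x] ij by simp
        moreover have "r ! i \<noteq> x" using xn ij by (metis nth_mem order.strict_trans)
        ultimately show ?thesis using True iq ij lt by simp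
      next
        case False then show ?thesis using iq rij ij by simp
      qed
    qed
  qed
  then show ?thesis by (simp add: sorted_wrt_iff_nth_less)
qed

lemma sorted_snoc_tw:
  assumes s: "sorted_wrt (<) r" and eq: "tw r x = length r" and xn: "x \<notin> set r"
  shows "sorted_wrt (<) (r @ [x])"
proof -
  have "\<forall>y\<in>set r. y < x" using tw_full[OF eq] xn by (metis le_neq_implies_less)
  then show ?thesis using s by (simp add: sorted_wrt_append)
qed

lemma rcompat_snoc: "rcompat r s \<Longrightarrow> rcompat (r @ [x]) s"
  unfolding rcompat_def by (auto simp: nth_append)

lemma rcompat_insert:
  assumes s: "sorted_wrt (<) r" and xn: "x \<notin> set r" and lt: "tw r x < length r"
    and t: "tab rs" and c: "case rs of [] \<Rightarrow> True | s # _ \<Rightarrow> rcompat r s"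
    and yn: "r ! tw r x \<notin> set (concat rs)"
  shows "case row_insert rs (r ! tw r x) of [] \<Rightarrow> True | s' # _ \<Rightarrow> rcompat (r[tw r x := x]) s'"
proof -
  let ?q = "tw r x" let ?y = "r ! tw r x" let ?r' = "r[tw r x := x]"
  have xy: "x < ?y" using tw_gt[OF s, of x ?q] lt by simp
  have rlt: "\<And>c. c < ?q \<Longrightarrow> r ! c < ?y" using s lt by (simp add: sorted_wrt_iff_nth_less)
  show ?thesis
  proof (cases rs)
    case Nil
    have "?r' ! 0 < ?y"
    proof (cases "?q = 0")
      case True then show ?thesis using xy lt by simp
    next
      case False then show ?thesis using rlt[of 0] lt by simp
    qed
    then show ?thesis using Nil lt by (simp add: rcompat_def)
  next
    case (Cons s0 ss)
    have crs: "rcompat r s0" and s0s: "sorted_wrt (<) s0" using c t Cons by auto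
    have yns: "?y \<notin> set s0" using yn Cons by simp
    let ?q' = "tw s0 ?y"
    have big: "\<And>c. c < length s0 \<Longrightarrow> r ! c < s0 ! c" using crs unfolding rcompat_def by blast
    have lens: "length s0 \<le> length r" using crs unfolding rcompat_def by blast
    show ?thesis
    proof (cases "?q' = length s0")
      case True
      have ls: "length s0 \<le> ?q"
      proof (rule ccontr)
        assume "\<not> length s0 \<le> ?q"
        then have "?q < length s0" by simp
        then have "s0 ! ?q \<le> ?y" using tw_le[where i="?q" and r=s0 and x="?y"] True by simp
        moreover have "?y < s0 ! ?q" using big[of ?q] \<open>?q < length s0\<close> by simp
        ultimately show False by simp
      qed
      have "rcompat ?r' (s0 @ [?y])" unfolding rcompat_def
      proof (intro conjI allI impI)
        show "length (s0 @ [?y]) \<le> length ?r'" using ls lt by simp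
      next
        fix c assume "c < length (s0 @ [?y])"
        then consider "c < length s0" | "c = length s0" by fastforce
        then show "?r' ! c < (s0 @ [?y]) ! c"
        proof cases
          case 1
          then have "c \<noteq> ?q" using ls by simp
          then show ?thesis using 1 big[OF 1] by (simp add: nth_append)
        next
          case 2
          show ?thesis
          proof (cases "c = ?q")
            case True then show ?thesis using 2 xy lt by (simp add: nth_append)
          next
            case False then have "c < ?q" using 2 ls by simp
            then show ?thesis using 2 False rlt by (simp add: nth_append)
          qed
        qed
      qed
      then show ?thesis using True Cons by (simp add: row_insert_Cons)
    next
      case False
      then have lt': "?q' < length s0" using length_takeWhile_le le_neq_implies_less by blast
      have qq: "?q' \<le> ?q"
      proof (rule ccontr)
        assume "\<not> ?q' \<le> ?q"
        then have "?q < ?q'" by simp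
        then have "s0 ! ?q \<le> ?y" using tw_le[where i="?q" and r=s0 and x="?y"] by simp
        moreover have "?y < s0 ! ?q" using big[of ?q] \<open>?q < ?q'\<close> lt' by simp
        ultimately show False by simp
      qed
      have "rcompat ?r' (s0[?q' := ?y])" unfolding rcompat_def
      proof (intro conjI allI impI)
        show "length (s0[?q' := ?y]) \<le> length ?r'" using lens by simp
      next
        fix c assume cl: "c < length (s0[?q' := ?y])"
        then have cl': "c < length s0" by simp
        have cr: "c < length r" using cl' lens by simp
        show "?r' ! c < s0[?q' := ?y] ! c"
        proof (cases "c = ?q'")
          case True
          show ?thesis
          proof (cases "c = ?q")
            case True then show ?thesis using \<open>c = ?q'\<close> xy lt lt' by simp
          next
            case False then have "c < ?q" using \<open>c = ?q'\<close> qq by simp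
            then show ?thesis using \<open>c = ?q'\<close> False rlt lt' cr by simp
          qed
        next
          case False
          note cq' = False
          show ?thesis
          proof (cases "c = ?q")
            case True
            have "?y < s0 ! c" using big[OF cl'] True by simp
            then show ?thesis using True cq' xy cl' lt by simp
          next
            case False then show ?thesis using cq' big[OF cl'] cr cl' by simp
          qed
        qed
      qed
      then show ?thesis using False Cons by (simp add: row_insert_Cons)
    qed
  qed
qed

lemma tab_insert: "tab T \<Longrightarrow> distinct (concat T) \<Longrightarrow> x \<notin> set (concat T) \<Longrightarrow> tab (row_insert T x)"
proof (induction T arbitrary: x)
  case Nil then show ?case by simp
next
  case (Cons r rs)
  have s: "sorted_wrt (<) r" and t: "tab rs" and c: "case rs of [] \<Rightarrow> True | s # _ \<Rightarrow> rcompat r s"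
    using Cons.prems by auto
  have xn: "x \<notin> set r" using Cons.prems by simp
  show ?case
  proof (cases "tw r x = length r")
    case True
    have "case rs of [] \<Rightarrow> True | s # _ \<Rightarrow> rcompat (r @ [x]) s"
      using c rcompat_snoc by (cases rs) auto
    then show ?thesis using True sorted_snoc_tw[OF s True xn] t by (simp add: row_insert_Cons)
  next
    case False
    then have lt: "tw r x < length r" using length_takeWhile_le le_neq_implies_less by blast
    have yn: "r ! tw r x \<notin> set (concat rs)" using Cons.prems(2) lt by (auto dest: nth_mem)
    have IH: "tab (row_insert rs (r ! tw r x))" using Cons.IH[OF t _ yn] Cons.prems(2) by simp
    have "case row_insert rs (r ! tw r x) of [] \<Rightarrow> True | s' # _ \<Rightarrow> rcompat (r[tw r x := x]) s'"
      by (rule rcompat_insert[OF s xn lt t c yn])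
    then show ?thesis using False IH sorted_upd[OF s lt xn] by (simp add: row_insert_Cons)
  qed
qed


lemma move_x_left: "sorted_wrt (<) (y0 # b) \<Longrightarrow> x < y0 \<Longrightarrow> keq (y0 # b @ [x]) (y0 # x # b)"
proof (induction b arbitrary: y0)
  case Nil then show ?case by (simp add: keq_refl)
next
  case (Cons c b)
  have sc: "sorted_wrt (<) (c # b)" and yc: "y0 < c" using Cons.prems by auto
  have "keq (c # b @ [x]) (c # x # b)" using Cons.IH[OF sc] Cons.prems(2) yc by simp
  then have 1: "keq (y0 # c # b @ [x]) (y0 # c # x # b)" using keq_ctx[of _ _ "[y0]" "[]"] by simp
  have "kstep ([] @ [y0, x, c] @ b) ([] @ [y0, c, x] @ b)" using Cons.prems(2) yc by (intro kstep.k1)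
  then have "keq (y0 # c # x # b) (y0 # x # c # b)" using keq_step keq_sym by simp
  then show ?case using 1 keq_trans by simp
qed

lemma move_y_left: "sorted_wrt (<) (a @ [m]) \<Longrightarrow> m < y \<Longrightarrow> keq (a @ y # m # rest) (y # a @ m # rest)"
proof (induction a)
  case Nil then show ?case by (simp add: keq_refl)
next
  case (Cons a0 a)
  have sa: "sorted_wrt (<) (a @ [m])" using Cons.prems by simp
  have "keq (a @ y # m # rest) (y # a @ m # rest)" using Cons.IH[OF sa] Cons.prems(2) .
  then have 1: "keq (a0 # a @ y # m # rest) (a0 # y # a @ m # rest)" using keq_ctx[of _ _ "[a0]" "[]"] by simp
  obtain e rest' where er: "a @ m # rest = e # rest'" and ee: "e = hd (a @ [m])" by (cases a) auto
  have "e \<in> set (a @ [m])" using ee by (cases a) auto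
  then have ae: "a0 < e" and ey: "e < y" using Cons.prems by (auto simp: sorted_wrt_append)
  have "kstep ([] @ [a0, y, e] @ rest') ([] @ [y, a0, e] @ rest')" using ae ey by (intro kstep.k2)
  then have "keq (a0 # y # e # rest') (y # a0 # e # rest')" using keq_step by simp
  then show ?case using 1 keq_trans er by simp
qed

lemma row_keq:
  assumes s: "sorted_wrt (<) r" and lt: "tw r x < length r" and xn: "x \<notin> set r"
  shows "keq (r @ [x]) (r ! tw r x # r[tw r x := x])"
proof -
  let ?q = "tw r x" let ?a = "take ?q r" let ?y = "r ! ?q" let ?b = "drop (Suc ?q) r"
  have r: "r = ?a @ ?y # ?b" using lt by (simp add: id_take_nth_drop)
  have r': "r[?q := x] = ?a @ x # ?b" using lt by (simp add: upd_conv_take_nth_drop)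
  have xy: "x < ?y" using tw_gt[OF s, of x ?q] lt by simp
  have sb: "sorted_wrt (<) (?y # ?b)" using s r by (metis sorted_wrt_append)
  have "keq (?y # ?b @ [x]) (?y # x # ?b)" by (rule move_x_left[OF sb xy])
  then have 1: "keq (?a @ ?y # ?b @ [x]) (?a @ ?y # x # ?b)" using keq_ctx[of _ _ ?a "[]"] by simp
  have sa: "sorted_wrt (<) ?a" using s r by (metis sorted_wrt_append)
  have "\<forall>z\<in>set ?a. z < x"
  proof
    fix z assume "z \<in> set ?a"
    then obtain i where i: "i < length ?a" "z = ?a ! i" by (metis in_set_conv_nth)
    then have "z = r ! i" "i < ?q" by auto
    then have "z \<le> x" using tw_le[where i=i and r=r and x=x] by simp
    moreover have "z \<noteq> x" using xn \<open>z \<in> set ?a\<close> by (meson in_set_takeD)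
    ultimately show "z < x" by simp
  qed
  then have "sorted_wrt (<) (?a @ [x])" using sa by (simp add: sorted_wrt_append)
  then have 2: "keq (?a @ ?y # x # ?b) (?y # ?a @ x # ?b)" using move_y_left xy by blast
  have "keq (?a @ ?y # ?b @ [x]) (?y # ?a @ x # ?b)" using keq_trans[OF 1 2] .
  then show ?thesis using r r' by (metis append.assoc append_Cons)
qed

lemma reading_insert:
  "tab T \<Longrightarrow> distinct (concat T) \<Longrightarrow> x \<notin> set (concat T) \<Longrightarrow> keq (reading (row_insert T x)) (reading T @ [x])"
proof (induction T arbitrary: x)
  case Nil then show ?case by (simp add: keq_refl)
next
  case (Cons r rs)
  have s: "sorted_wrt (<) r" and t: "tab rs" using Cons.prems by auto
  have xn: "x \<notin> set r" using Cons.prems by simp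
  show ?case
  proof (cases "tw r x = length r")
    case True then show ?thesis by (simp add: row_insert_Cons keq_refl)
  next
    case False
    then have lt: "tw r x < length r" using length_takeWhile_le le_neq_implies_less by blast
    let ?y = "r ! tw r x" let ?r' = "r[tw r x := x]"
    have yn: "?y \<notin> set (concat rs)" using Cons.prems(2) lt by (auto dest: nth_mem)
    have "keq (reading (row_insert rs ?y)) (reading rs @ [?y])" using Cons.IH[OF t _ yn] Cons.prems(2) by simp
    then have 1: "keq (reading (row_insert rs ?y) @ ?r') (reading rs @ ?y # ?r')"
      using keq_ctx[of _ _ "[]" ?r'] by fastforce
    have "keq (r @ [x]) (?y # ?r')" by (rule row_keq[OF s lt xn])
    then have "keq (reading rs @ r @ [x]) (reading rs @ ?y # ?r')" using keq_ctx[of _ _ "reading rs" "[]"] by simp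
    then have 2: "keq (reading rs @ ?y # ?r') (reading rs @ r @ [x])" by (rule keq_sym)
    show ?thesis using keq_trans[OF 1 2] False by (simp add: row_insert_Cons)
  qed
qed

lemma foldl_insert:
  "tab T \<Longrightarrow> distinct (concat T @ w) \<Longrightarrow>
    keq (reading (foldl row_insert T w)) (reading T @ w) \<and> tab (foldl row_insert T w)
    \<and> distinct (concat (foldl row_insert T w))"
proof (induction w arbitrary: T)
  case Nil then show ?case by (simp add: keq_refl)
next
  case (Cons x w)
  have xn: "x \<notin> set (concat T)" and dT: "distinct (concat T)" using Cons.prems by auto
  have t': "tab (row_insert T x)" by (rule tab_insert[OF Cons.prems(1) dT xn])
  have d': "distinct (concat (row_insert T x) @ w)"
    using row_insert_distinct[OF dT xn] row_insert_set[of T x] Cons.prems(2) by auto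
  have IH: "keq (reading (foldl row_insert (row_insert T x) w)) (reading (row_insert T x) @ w)"
    "tab (foldl row_insert (row_insert T x) w)" "distinct (concat (foldl row_insert (row_insert T x) w))"
    using Cons.IH[OF t' d'] by auto
  have "keq (reading (row_insert T x) @ w) (reading T @ [x] @ w)"
    using keq_ctx[OF reading_insert[OF Cons.prems(1) dT xn], of "[]" w] by simp
  then show ?case using IH keq_trans by simp
qed

lemma rsk_keq: "distinct w \<Longrightarrow> keq (reading (rsk_P w)) w \<and> tab (rsk_P w) \<and> distinct (concat (rsk_P w))"
  using foldl_insert[of "[]" w] unfolding rsk_P_def by simp


lemma reading_set: "set (reading T) = set (concat T)"
  by (induction T) auto

lemma reading_len: "length (reading T) = length (concat T)"
  by (induction T) auto

lemma reading_distinct: "distinct (concat T) \<Longrightarrow> distinct (reading T)"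
  by (metis card_distinct distinct_card reading_len reading_set)

lemma wpos_app1: "z \<in> set u \<Longrightarrow> wpos (u @ v) z = wpos u z \<and> wpos u z < length u"
  by (simp add: wpos_append wpos_nth)

lemma wpos_app2: "z \<notin> set u \<Longrightarrow> wpos (u @ v) z = length u + wpos v z"
  by (simp add: wpos_append)

lemma chain_app1: "chain u C \<Longrightarrow> chain (u @ v) C"
  unfolding chain_def using wpos_app1 by (simp add: subset_iff)

lemma chain_app2: "chain v C \<Longrightarrow> C \<inter> set u = {} \<Longrightarrow> chain (u @ v) C"
proof -
  assume c: "chain v C" and dj: "C \<inter> set u = {}"
  have "\<And>z. z \<in> C \<Longrightarrow> wpos (u @ v) z = length u + wpos v z" using dj wpos_app2 by blast
  then show ?thesis using c unfolding chain_def by auto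
qed

lemma chain_sorted: "sorted_wrt (<) r \<Longrightarrow> chain r (set r)"
  unfolding chain_def
proof (intro conjI ballI impI)
  fix a b assume s: "sorted_wrt (<) r" and ab: "a \<in> set r" "b \<in> set r" "a < b"
  have pa: "wpos r a < length r" "r ! wpos r a = a" and pb: "wpos r b < length r" "r ! wpos r b = b"
    using wpos_nth ab by auto
  show "wpos r a < wpos r b"
  proof (rule ccontr)
    assume "\<not> wpos r a < wpos r b"
    then have "wpos r b < wpos r a \<or> wpos r b = wpos r a" by auto
    then show False
    proof
      assume "wpos r b < wpos r a"
      then have "b < a" using s pa pb by (metis sorted_wrt_nth_less)
      then show False using ab by simp
    next
      assume "wpos r b = wpos r a" then show False using pa pb ab by simp
    qed
  qed
qed simp

lemma row_chain: "tab T \<Longrightarrow> distinct (concat T) \<Longrightarrow> i < length T \<Longrightarrow> chain (reading T) (set (T ! i))"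
proof (induction T arbitrary: i)
  case Nil then show ?case by simp
next
  case (Cons r rs)
  show ?case
  proof (cases i)
    case 0
    have "chain r (set r)" using Cons.prems chain_sorted by simp
    moreover have "set r \<inter> set (reading rs) = {}" using Cons.prems(2) by (auto simp: reading_set)
    ultimately show ?thesis using 0 chain_app2 by (simp add: Int_commute)
  next
    case (Suc j)
    then have "chain (reading rs) (set (rs ! j))" using Cons by simp
    then show ?thesis using Suc chain_app1 by simp
  qed
qed

lemma col_lt: "tab T \<Longrightarrow> i < i' \<Longrightarrow> i' < length T \<Longrightarrow> c < length (T ! i') \<Longrightarrow>
    c < length (T ! i) \<and> T ! i ! c < T ! i' ! c"
proof (induction T arbitrary: i i')
  case Nil then show ?case by simp
next
  case (Cons r rs)
  obtain j where j: "i' = Suc j" using Cons.prems(2) by (cases i') auto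
  have t: "tab rs" using Cons.prems by simp
  show ?case
  proof (cases i)
    case 0
    obtain s0 ss where rs: "rs = s0 # ss" using Cons.prems(3) j by (cases rs) auto
    have cp: "rcompat r s0" using Cons.prems(1) rs by simp
    show ?thesis
    proof (cases j)
      case 0 then show ?thesis using cp j rs Cons.prems 0 unfolding rcompat_def by auto
    next
      case (Suc j0)
      have "c < length (rs ! 0) \<and> rs ! 0 ! c < rs ! j ! c"
        using Cons.IH[OF t, of 0 j] Suc j Cons.prems by simp
      then show ?thesis using cp rs 0 j unfolding rcompat_def by auto
    qed
  next
    case (Suc i0)
    then show ?thesis using Cons.IH[OF t, of i0 j] j Cons.prems by simp
  qed
qed

lemma col_pos: "tab T \<Longrightarrow> distinct (concat T) \<Longrightarrow> i < i' \<Longrightarrow> i' < length T \<Longrightarrow> c < length (T ! i') \<Longrightarrow>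
    wpos (reading T) (T ! i' ! c) < wpos (reading T) (T ! i ! c)"
proof (induction T arbitrary: i i')
  case Nil then show ?case by simp
next
  case (Cons r rs)
  obtain j where j: "i' = Suc j" using Cons.prems(3) by (cases i') auto
  have t: "tab rs" and d: "distinct (concat rs)" using Cons.prems by auto
  have cl: "c < length ((r # rs) ! i)" using col_lt[OF Cons.prems(1,3,4,5)] by simp
  have "rs ! j \<in> set rs" "rs ! j ! c \<in> set (rs ! j)" using Cons.prems j by auto
  then have zin: "rs ! j ! c \<in> set (reading rs)" by (auto simp: reading_set)
  show ?case
  proof (cases i)
    case 0
    have rin: "r ! c \<in> set r" using cl 0 by simp
    then have "r ! c \<notin> set (reading rs)" using Cons.prems(2) by (auto simp: reading_set)
    then have "wpos (reading rs @ r) (r ! c) \<ge> length (reading rs)" using wpos_app2 by simp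
    moreover have "wpos (reading rs @ r) (rs ! j ! c) < length (reading rs)" using wpos_app1[OF zin] by simp
    ultimately show ?thesis using 0 j by simp
  next
    case (Suc i0)
    have "wpos (reading rs) (rs ! j ! c) < wpos (reading rs) (rs ! i0 ! c)"
      using Cons.IH[OF t d, of i0 j] Suc j Cons.prems by simp
    moreover have "rs ! i0 \<in> set rs" "rs ! i0 ! c \<in> set (rs ! i0)" using cl Suc Cons.prems j by auto
    moreover have "rs ! i0 ! c \<in> set (reading rs)" using calculation by (auto simp: reading_set)
    ultimately show ?thesis using wpos_app1 zin Suc j by simp
  qed
qed

lemma rows_disj: "distinct (concat T) \<Longrightarrow> i < j \<Longrightarrow> j < length T \<Longrightarrow> set (T ! i) \<inter> set (T ! j) = {}"
proof (induction T arbitrary: i j)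
  case Nil then show ?case by simp
next
  case (Cons r rs)
  obtain j0 where j: "j = Suc j0" using Cons.prems by (cases j) auto
  show ?case
  proof (cases i)
    case 0
    have "set (rs ! j0) \<subseteq> set (concat rs)" using Cons.prems j by auto
    then show ?thesis using 0 j Cons.prems(1) by auto
  next
    case (Suc i0) then show ?thesis using Cons j by simp
  qed
qed

lemma row_distinct: "distinct (concat T) \<Longrightarrow> i < length T \<Longrightarrow> distinct (T ! i)"
  by (induction T arbitrary: i) (auto simp: nth_Cons split: nat.splits)


lemma sum_part: "(\<Sum>i<k. part (map length T) i) = (\<Sum>i\<in>{i. i < k \<and> i < length T}. length (T ! i))"
proof -
  have "(\<Sum>i<k. part (map length T) i) = (\<Sum>i<k. if i < length T then length (T ! i) else 0)"
    by (rule sum.cong) (auto simp: part_def)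
  also have "\<dots> = (\<Sum>i\<in>{i \<in> {..<k}. i < length T}. length (T ! i))"
    by (rule sum.inter_filter[symmetric]) simp
  also have "{i \<in> {..<k}. i < length T} = {i. i < k \<and> i < length T}" by auto
  finally show ?thesis .
qed

lemma Ival_lower:
  assumes t: "tab T" and d: "distinct (concat T)"
  shows "(\<Sum>i<k. part (map length T) i) \<le> Ival k (reading T)"
proof -
  define C where "C i = (if i < length T then set (T ! i) else {})" for i
  have ch: "chain (reading T) (C i)" for i
    using row_chain[OF t d] unfolding C_def by (auto simp: chain_def)
  have "card (\<Union>i<k. C i) = (\<Sum>i<k. card (C i))"
  proof (rule card_UN_disjoint)
    show "\<forall>i\<in>{..<k}. \<forall>j\<in>{..<k}. i \<noteq> j \<longrightarrow> C i \<inter> C j = {}"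
    proof (intro ballI impI)
      fix i j :: nat assume "i \<noteq> j"
      then have "i < j \<or> j < i" by auto
      then show "C i \<inter> C j = {}" using rows_disj[OF d] unfolding C_def by (auto simp: Int_commute)
    qed
  qed (auto simp: C_def)
  also have "\<dots> = (\<Sum>i<k. part (map length T) i)"
    by (rule sum.cong) (auto simp: C_def part_def distinct_card[OF row_distinct[OF d]])
  finally have "card (\<Union>i<k. C i) = (\<Sum>i<k. part (map length T) i)" .
  moreover have "card (\<Union>i<k. C i) \<le> Ival k (reading T)" using ch by (intro Ival_ge)
  ultimately show ?thesis by simp
qed

lemma down_closed:
  assumes f: "finite H" and dc: "\<And>i j. i \<in> H \<Longrightarrow> j < i \<Longrightarrow> j \<in> H" and r: "r < card H"
  shows "r \<in> H"
proof (rule ccontr)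
  assume "r \<notin> H"
  then have "H \<subseteq> {..<r}" using dc by (auto simp: not_less[symmetric]) (metis le_neq_implies_less not_less)
  then have "card H \<le> card {..<r}" by (rule card_mono[rotated]) simp
  then have "card H \<le> r" by simp
  then show False using r by simp
qed

lemma Ival_upper:
  assumes t: "tab T" and d: "distinct (concat T)"
  shows "Ival k (reading T) \<le> (\<Sum>i<k. part (map length T) i)"
proof -
  obtain C where C: "\<forall>i<k. chain (reading T) (C i)" "card (\<Union>i<k. C i) = Ival k (reading T)"
    using Ival_ex by blast
  let ?U = "\<Union>i<k. C i"
  have Usub: "?U \<subseteq> set (concat T)"
  proof
    fix z assume "z \<in> ?U"
    then obtain i where "i < k" "z \<in> C i" by blast
    then show "z \<in> set (concat T)" using C(1) reading_set[of T] unfolding chain_def by blast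
  qed
  have finU: "finite ?U" by (rule finite_subset[OF Usub List.finite_set])
  define colof where "colof z = (SOME c. \<exists>i<length T. c < length (T ! i) \<and> T ! i ! c = z)" for z
  have colspec: "\<exists>i<length T. colof z < length (T ! i) \<and> T ! i ! colof z = z" if zin: "z \<in> set (concat T)" for z
  proof -
    obtain row where "row \<in> set T" "z \<in> set row" using zin by auto
    then obtain i c where "i < length T" "T ! i = row" "c < length row" "row ! c = z" by (metis in_set_conv_nth)
    then have "\<exists>c. \<exists>i<length T. c < length (T ! i) \<and> T ! i ! c = z" by blast
    then show ?thesis unfolding colof_def by (rule someI_ex)
  qed
  define Uc where "Uc c = {v \<in> ?U. colof v = c}" for c
  define H where "H c = {i. i < length T \<and> c < length (T ! i)}" for c
  define rank where "rank z = card {v \<in> Uc (colof z). v < z}" for z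
  define Sig where "Sig = Sigma {i. i < k \<and> i < length T} (\<lambda>i. {..<length (T ! i)})"
  have finUc: "finite (Uc c)" for c using finU unfolding Uc_def by simp
  have finH: "finite (H c)" for c unfolding H_def by simp
  have one: "v = v'" if A: "l < k" "v \<in> C l" "v' \<in> C l" "v \<in> Uc c" "v' \<in> Uc c" for l v v' c
  proof -
    have vin: "v \<in> set (concat T)" "v' \<in> set (concat T)" using A Usub unfolding Uc_def by auto
    obtain i where i: "i < length T" "c < length (T ! i)" "T ! i ! c = v"
      using colspec[OF vin(1)] A(4) unfolding Uc_def by auto
    obtain i' where i': "i' < length T" "c < length (T ! i')" "T ! i' ! c = v'"
      using colspec[OF vin(2)] A(5) unfolding Uc_def by auto
    have ch: "chain (reading T) (C l)" using C(1) A(1) by simp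
    have "\<not> i < i'"
    proof
      assume ii: "i < i'"
      have "v < v'" using col_lt[OF t ii i'(1) i'(2)] i i' by simp
      moreover have "wpos (reading T) v' < wpos (reading T) v" using col_pos[OF t d ii i'(1) i'(2)] i i' by simp
      ultimately show False using chain_lt[OF ch A(2) A(3)] by simp
    qed
    moreover have "\<not> i' < i"
    proof
      assume ii: "i' < i"
      have "v' < v" using col_lt[OF t ii i(1) i(2)] i i' by simp
      moreover have "wpos (reading T) v < wpos (reading T) v'" using col_pos[OF t d ii i(1) i(2)] i i' by simp
      ultimately show False using chain_lt[OF ch A(3) A(2)] by simp
    qed
    ultimately show "v = v'" using i i' by simp
  qed
  have Uck: "card (Uc c) \<le> k" for c
  proof -
    have "Uc c = (\<Union>l<k. C l \<inter> Uc c)" unfolding Uc_def by blast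
    then have "card (Uc c) \<le> (\<Sum>l<k. card (C l \<inter> Uc c))" using card_UN_le[of "{..<k}" "\<lambda>l. C l \<inter> Uc c"] by simp
    also have "\<dots> \<le> (\<Sum>l<k. 1)"
    proof (rule sum_mono)
      fix l assume "l \<in> {..<k}"
      have "finite (C l \<inter> Uc c)" using finUc[of c] by simp
      then have "card (C l \<inter> Uc c) \<le> Suc 0" using one[of l] \<open>l \<in> {..<k}\<close>
        by (subst card_le_Suc0_iff_eq) auto
      then show "card (C l \<inter> Uc c) \<le> 1" by simp
    qed
    finally show ?thesis by simp
  qed
  have UcH: "card (Uc c) \<le> card (H c)" for c
  proof -
    have "Uc c \<subseteq> (\<lambda>i. T ! i ! c) ` H c"
    proof
      fix v assume v: "v \<in> Uc c"
      then have "v \<in> set (concat T)" using Usub unfolding Uc_def by auto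
      then show "v \<in> (\<lambda>i. T ! i ! c) ` H c" using colspec[of v] v unfolding Uc_def H_def by force
    qed
    then have "card (Uc c) \<le> card ((\<lambda>i. T ! i ! c) ` H c)" by (intro card_mono) (auto simp: finH)
    also have "\<dots> \<le> card (H c)" by (rule card_image_le[OF finH])
    finally show ?thesis .
  qed
  have dcH: "j \<in> H c" if "i \<in> H c" "j < i" for i j c
    using that col_lt[OF t, of j i c] unfolding H_def by auto
  have rank_lt: "rank z < card (Uc (colof z))" if "z \<in> ?U" for z
  proof -
    have "{v \<in> Uc (colof z). v < z} \<subset> Uc (colof z)" using that unfolding Uc_def by auto
    then show ?thesis unfolding rank_def by (rule psubset_card_mono[OF finUc])
  qed
  have inj: "inj_on (\<lambda>z. (rank z, colof z)) ?U"
  proof (rule inj_onI)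
    fix z z' assume z: "z \<in> ?U" "z' \<in> ?U" and eq: "(rank z, colof z) = (rank z', colof z')"
    have lt: "rank z < rank z'" if "z < z'" "z \<in> ?U" "z' \<in> ?U" "colof z = colof z'" for z z'
    proof -
      have "insert z {v \<in> Uc (colof z). v < z} \<subseteq> {v \<in> Uc (colof z'). v < z'}"
        using that unfolding Uc_def by auto
      moreover have "z \<notin> {v \<in> Uc (colof z). v < z}" by simp
      ultimately have "card (insert z {v \<in> Uc (colof z). v < z}) \<le> card {v \<in> Uc (colof z'). v < z'}"
        by (intro card_mono) (auto simp: finUc)
      then show ?thesis unfolding rank_def using finUc by (simp add: card_insert_disjoint)
    qed
    show "z = z'"
    proof (rule ccontr)
      assume "z \<noteq> z'"
      then have "z < z' \<or> z' < z" by auto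
      then show False using lt[of z z'] lt[of z' z] z eq by auto
    qed
  qed
  have img: "(\<lambda>z. (rank z, colof z)) ` ?U \<subseteq> Sig"
  proof
    fix p assume "p \<in> (\<lambda>z. (rank z, colof z)) ` ?U"
    then obtain z where z: "z \<in> ?U" "p = (rank z, colof z)" by blast
    have r1: "rank z < k" using rank_lt[OF z(1)] Uck[of "colof z"] by simp
    have r2: "rank z < card (H (colof z))" using rank_lt[OF z(1)] UcH[of "colof z"] by simp
    have "rank z \<in> H (colof z)" using down_closed[OF finH _ r2] dcH by blast
    then show "p \<in> Sig" using z r1 unfolding Sig_def H_def by auto
  qed
  have finSig: "finite Sig" unfolding Sig_def by auto
  have "card ?U \<le> card Sig" by (rule card_inj_on_le[OF inj img finSig])
  also have "card Sig = (\<Sum>i\<in>{i. i < k \<and> i < length T}. length (T ! i))"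
    unfolding Sig_def by (subst card_SigmaI) auto
  also have "\<dots> = (\<Sum>i<k. part (map length T) i)" by (rule sum_part[symmetric])
  finally show ?thesis using C(2) by simp
qed

lemma Ival_shape: "distinct w \<Longrightarrow> Ival k w = (\<Sum>i<k. part (rsk_shape w) i)"
proof -
  assume d: "distinct w"
  have h: "keq (reading (rsk_P w)) w" "tab (rsk_P w)" "distinct (concat (rsk_P w))" using rsk_keq[OF d] by auto
  have "Ival k (reading (rsk_P w)) = Ival k w"
    using keq_Ival[OF h(1) reading_distinct[OF h(3)]] by simp
  moreover have "Ival k (reading (rsk_P w)) = (\<Sum>i<k. part (map length (rsk_P w)) i)"
    using Ival_lower[OF h(2,3)] Ival_upper[OF h(2,3)] by (rule antisym[rotated])
  ultimately show ?thesis unfolding rsk_shape_def by simp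
qed


lemma adj_swap_split:
  assumes "Suc p < length w"
  shows "w = take p w @ w ! p # w ! Suc p # drop (Suc (Suc p)) w"
    and "adj_swap w p = take p w @ w ! Suc p # w ! p # drop (Suc (Suc p)) w"
proof -
  have e: "w = take p w @ w ! p # w ! Suc p # drop (Suc (Suc p)) w"
    using assms by (metis Cons_nth_drop_Suc Suc_lessD append_take_drop_id)
  then show "w = take p w @ w ! p # w ! Suc p # drop (Suc (Suc p)) w" .
  have lt: "length (take p w) = p" using assms by simp
  show "adj_swap w p = take p w @ w ! Suc p # w ! p # drop (Suc (Suc p)) w"
    unfolding adj_swap_def
    apply (subst (1) e)
    using lt by (simp add: list_update_append)
qed

lemma card_Suc_filter: "card {m. m < Suc t \<and> Q m} = card {m. m < t \<and> Q m} + (if Q t then 1 else 0)"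
proof (cases "Q t")
  case True
  then have "{m. m < Suc t \<and> Q m} = insert t {m. m < t \<and> Q m}" by auto
  then show ?thesis using True by simp
next
  case False
  then have "{m. m < Suc t \<and> Q m} = {m. m < t \<and> Q m}" using less_Suc_eq by auto
  then show ?thesis using False by simp
qed

lemma step_bounds:
  assumes d: "distinct w" and p: "Suc p < length w"
  shows "w ! p < w ! Suc p \<Longrightarrow> Ival k (adj_swap w p) \<le> Ival k w \<and> Ival k w \<le> Ival k (adj_swap w p) + 1"
    and "\<not> w ! p < w ! Suc p \<Longrightarrow> Ival k w \<le> Ival k (adj_swap w p) \<and> Ival k (adj_swap w p) \<le> Ival k w + 1"
proof -
  let ?u = "take p w" let ?a = "w ! p" let ?b = "w ! Suc p" let ?v = "drop (Suc (Suc p)) w"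
  note sp = adj_swap_split[OF p]
  have d1: "distinct (?u @ ?a # ?b # ?v)" using d sp(1) by simp
  have d2: "distinct (?u @ ?b # ?a # ?v)" using d1 by auto
  {
    assume "?a < ?b"
    then show "Ival k (adj_swap w p) \<le> Ival k w \<and> Ival k w \<le> Ival k (adj_swap w p) + 1"
      using Ival_swap_le[OF d1] Ival_swap_ge[OF d1] sp by (metis)
  }
  {
    assume "\<not> ?a < ?b"
    moreover have "?a \<noteq> ?b" using d1 by simp
    ultimately have ba: "?b < ?a" by simp
    show "Ival k w \<le> Ival k (adj_swap w p) \<and> Ival k (adj_swap w p) \<le> Ival k w + 1"
      using Ival_swap_le[OF d2 ba] Ival_swap_ge[OF d2] sp by (metis)
  }
qed

theorem lemma2:
  fixes n t r s :: nat and \<sigma> :: "nat \<Rightarrow> nat list" and pos :: "nat \<Rightarrow> nat"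
  assumes perms: "\<And>m. m \<le> t \<Longrightarrow> is_perm n (\<sigma> m)"
    and steps: "\<And>m. m < t \<Longrightarrow> Suc (pos m) < n \<and> \<sigma> (Suc m) = adj_swap (\<sigma> m) (pos m)"
    and s_def: "s = card {m. m < t \<and> \<sigma> m ! pos m < \<sigma> m ! Suc (pos m)}"
    and r_def: "r = card {m. m < t \<and> \<not> (\<sigma> m ! pos m < \<sigma> m ! Suc (pos m))}"
    and j: "1 \<le> j" "j \<le> n"
  shows "int (\<Sum>i<j. part (rsk_shape (\<sigma> t)) i) - int r \<le> int (\<Sum>i<j. part (rsk_shape (\<sigma> 0)) i)
       \<and> int (\<Sum>i<j. part (rsk_shape (\<sigma> 0)) i) \<le> int (\<Sum>i<j. part (rsk_shape (\<sigma> t)) i) + int s"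
proof -
  let ?P = "\<lambda>m. \<sigma> m ! pos m < \<sigma> m ! Suc (pos m)"
  let ?G = "\<lambda>m. int (Ival j (\<sigma> m))"
  have dist: "distinct (\<sigma> m)" "length (\<sigma> m) = n" if "m \<le> t" for m
    using perms[OF that] unfolding is_perm_def by auto
  have G: "(\<Sum>i<j. part (rsk_shape (\<sigma> m)) i) = Ival j (\<sigma> m)" if "m \<le> t" for m
    using Ival_shape[OF dist(1)[OF that]] by simp
  have main: "?G t' - int (card {m. m < t' \<and> \<not> ?P m}) \<le> ?G 0 \<and> ?G 0 \<le> ?G t' + int (card {m. m < t' \<and> ?P m})"
    if "t' \<le> t" for t'
    using that
  proof (induction t')
    case 0 then show ?case by simp
  next
    case (Suc t')
    have tt: "t' < t" using Suc.prems by simp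
    have IH: "?G t' - int (card {m. m < t' \<and> \<not> ?P m}) \<le> ?G 0 \<and> ?G 0 \<le> ?G t' + int (card {m. m < t' \<and> ?P m})"
      using Suc.IH tt by simp
    have st: "Suc (pos t') < n" "\<sigma> (Suc t') = adj_swap (\<sigma> t') (pos t')" using steps[OF tt] by auto
    have dt: "distinct (\<sigma> t')" "Suc (pos t') < length (\<sigma> t')" using dist[of t'] tt st by auto
    show ?case
    proof (cases "?P t'")
      case True
      have "Ival j (\<sigma> (Suc t')) \<le> Ival j (\<sigma> t') \<and> Ival j (\<sigma> t') \<le> Ival j (\<sigma> (Suc t')) + 1"
        using step_bounds(1)[OF dt True] st by simp
      then show ?thesis using IH True by (simp add: card_Suc_filter)
    next
      case False
      have "Ival j (\<sigma> t') \<le> Ival j (\<sigma> (Suc t')) \<and> Ival j (\<sigma> (Suc t')) \<le> Ival j (\<sigma> t') + 1"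
        using step_bounds(2)[OF dt False] st by simp
      then show ?thesis using IH False by (simp add: card_Suc_filter)
    qed
  qed
  show ?thesis using main[of t] G[of t] G[of 0] s_def r_def by simp
qed


end
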